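(* For every $p\in\mathbb{H}_1[X]$, the degree $\deg(p)$ is integral (or $-\infty$ for $p=0$). Furthermore, for all $p,q\in\mathbb{H}_1[X]$, $\deg(p\cdot q)=\deg(p)+\deg(q)$.
   Context: $\mathbb{H}$ is the skew-field of real quaternions (basis $1,i,j,k$, $i^2=j^2=k^2=ijk=-1$, $ij=-ji=k$ and cyclic permutations); for $a=a_0+ia_1+ja_2+ka_3$ write $\Re(a)=a_0$, $\Im_i(a)=a_1$, $\Im_j(a)=a_2$, $\Im_k(a)=a_3$. The set $\mathbb{H}^{\mathbb{H}}$ of all maps $\mathbb{H}\to\mathbb{H}$ is a ring under pointwise addition and multiplication; identify $a\in\mathbb{H}$ with the constant map $x\mapsto a$ and let $X$ be the identity map. $\mathbb{H}_1[X]$ is the smallest subring of $\mathbb{H}^{\mathbb{H}}$ containing $X$ and all constant maps (e.g. $a_1+X a_2 X X a_3 + a_4 XXX a_5$). For $f\in\mathbb{H}_1[X]$ define real four-variate functions $\tilde f_0,\ldots,\tilde f_3$ by $\tilde f_0(X_0,\ldots,X_3)=\Re(f(X_0+iX_1+jX_2+kX_3))$, $\tilde f_1=\Im_i(f(\cdot))$, $\tilde f_2=\Im_j(f(\cdot))$, $\tilde f_3=\Im_k(f(\cdot))$; these are real polynomials in $X_0,\ldots,X_3$. The degree of $f\in\mathbb{H}_1[X]$ is defined as $\deg(f):=\tfrac12\deg(\tilde f_0^2+\tilde f_1^2+\tilde f_2^2+\tilde f_3^2)$, where on the right $\deg$ is total degree of a real four-variate polynomial (with $\deg(0)=-\infty$).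 *)

theory Defs
  imports Complex_Main "HOL-Library.Extended_Real"
begin

datatype quat = Quat (Re_q: real) (Im_i: real) (Im_j: real) (Im_k: real)

definition qadd :: "quat \<Rightarrow> quat \<Rightarrow> quat" where
  "qadd a b = Quat (Re_q a + Re_q b) (Im_i a + Im_i b) (Im_j a + Im_j b) (Im_k a + Im_k b)"

definition qneg :: "quat \<Rightarrow> quat" where
  "qneg a = Quat (- Re_q a) (- Im_i a) (- Im_j a) (- Im_k a)"

text \<open>Hamilton product (i^2 = j^2 = k^2 = ijk = -1, ij = k, jk = i, ki = j).\<close>
definition qmul :: "quat \<Rightarrow> quat \<Rightarrow> quat" where
  "qmul a b = Quat
     (Re_q a * Re_q b - Im_i a * Im_i b - Im_j a * Im_j b - Im_k a * Im_k b)
     (Re_q a * Im_i b + Im_i a * Re_q b + Im_j a * Im_k b - Im_k a * Im_j b)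
     (Re_q a * Im_j b - Im_i a * Im_k b + Im_j a * Re_q b + Im_k a * Im_i b)
     (Re_q a * Im_k b + Im_i a * Im_j b - Im_j a * Im_i b + Im_k a * Re_q b)"

definition qzero :: quat where "qzero = Quat 0 0 0 0"

inductive_set H1X :: "(quat \<Rightarrow> quat) set" where
  const: "(\<lambda>x. c) \<in> H1X"
| ident: "(\<lambda>x. x) \<in> H1X"
| add: "f \<in> H1X \<Longrightarrow> g \<in> H1X \<Longrightarrow> (\<lambda>x. qadd (f x) (g x)) \<in> H1X"
| neg: "f \<in> H1X \<Longrightarrow> (\<lambda>x. qneg (f x)) \<in> H1X"
| mul: "f \<in> H1X \<Longrightarrow> g \<in> H1X \<Longrightarrow> (\<lambda>x. qmul (f x) (g x)) \<in> H1X"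

definition poly4_le :: "nat \<Rightarrow> (real \<Rightarrow> real \<Rightarrow> real \<Rightarrow> real \<Rightarrow> real) \<Rightarrow> bool" where
  "poly4_le d g \<longleftrightarrow> (\<exists>cf :: nat \<times> nat \<times> nat \<times> nat \<Rightarrow> real.
     (\<forall>a b c e. cf (a, b, c, e) \<noteq> 0 \<longrightarrow> a + b + c + e \<le> d) \<and>
     (\<forall>x0 x1 x2 x3. g x0 x1 x2 x3 =
        (\<Sum>a\<le>d. \<Sum>b\<le>d. \<Sum>c\<le>d. \<Sum>e\<le>d.
           cf (a, b, c, e) * x0 ^ a * x1 ^ b * x2 ^ c * x3 ^ e)))"

text \<open>Total degree of a real four-variate polynomial (function), with deg 0 = -infinity.
  (Real polynomial functions determine their coefficients, so this is the usual
  total degree.)\<close>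
definition tdeg4 :: "(real \<Rightarrow> real \<Rightarrow> real \<Rightarrow> real \<Rightarrow> real) \<Rightarrow> ereal" where
  "tdeg4 g = (if g = (\<lambda>_ _ _ _. 0) then -\<infinity> else ereal (real (LEAST d. poly4_le d g)))"

definition qdeg :: "(quat \<Rightarrow> quat) \<Rightarrow> ereal" where
  "qdeg f = tdeg4 (\<lambda>x0 x1 x2 x3.
      let y = f (Quat x0 x1 x2 x3) in
        (Re_q y)\<^sup>2 + (Im_i y)\<^sup>2 + (Im_j y)\<^sup>2 + (Im_k y)\<^sup>2) / 2"

end

theory Submission
  imports Defs "HOL-Computational_Algebra.Polynomial"
begin

type_synonym rf = "real \<Rightarrow> real \<Rightarrow> real \<Rightarrow> real \<Rightarrow> real"

inductive P4 :: "nat \<Rightarrow> rf \<Rightarrow> bool" where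
  z: "P4 d (\<lambda>_ _ _ _. 0)"
| m: "a + b + c + e \<le> d \<Longrightarrow> P4 d (\<lambda>x0 x1 x2 x3. k * (x0^a * x1^b * x2^c * x3^e))"
| ad: "P4 d f \<Longrightarrow> P4 d g \<Longrightarrow> P4 d (\<lambda>x0 x1 x2 x3. f x0 x1 x2 x3 + g x0 x1 x2 x3)"

lemma P4_mono: "P4 d f \<Longrightarrow> d \<le> d' \<Longrightarrow> P4 d' f"
  by (induction rule: P4.induct) (auto intro: P4.intros)

lemma P4_scale: "P4 d f \<Longrightarrow> P4 d (\<lambda>x0 x1 x2 x3. k * f x0 x1 x2 x3)"
proof (induction rule: P4.induct)
  case (z d) then show ?case using P4.z by simp
next
  case (m a b c e d k')
  then show ?case using P4.m[of a b c e d "k*k'"] by (simp add: mult.assoc)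
next
  case (ad d f g) then show ?case using P4.ad[OF ad.IH] by (simp add: distrib_left)
qed

lemma P4_neg: "P4 d f \<Longrightarrow> P4 d (\<lambda>x0 x1 x2 x3. - f x0 x1 x2 x3)"
  using P4_scale[of d f "-1"] by simp

lemma P4_diff: "P4 d f \<Longrightarrow> P4 d g \<Longrightarrow> P4 d (\<lambda>x0 x1 x2 x3. f x0 x1 x2 x3 - g x0 x1 x2 x3)"
  using P4.ad[of d f "\<lambda>x0 x1 x2 x3. - g x0 x1 x2 x3"] P4_neg[of d g] by simp

lemma P4_const: "P4 d (\<lambda>_ _ _ _. k)"
  using P4.m[of 0 0 0 0 d k] by simp

lemma P4_x0: "P4 1 (\<lambda>x0 x1 x2 x3. x0)" using P4.m[of 1 0 0 0 1 1] by simp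
lemma P4_x1: "P4 1 (\<lambda>x0 x1 x2 x3. x1)" using P4.m[of 0 1 0 0 1 1] by simp
lemma P4_x2: "P4 1 (\<lambda>x0 x1 x2 x3. x2)" using P4.m[of 0 0 1 0 1 1] by simp
lemma P4_x3: "P4 1 (\<lambda>x0 x1 x2 x3. x3)" using P4.m[of 0 0 0 1 1 1] by simp

lemma P4_mul_m:
  assumes "P4 e g" "a + b + c + ee \<le> d"
  shows "P4 (d + e) (\<lambda>x0 x1 x2 x3. (k * (x0^a * x1^b * x2^c * x3^ee)) * g x0 x1 x2 x3)"
  using assms(1)
proof (induction rule: P4.induct)
  case (z d) then show ?case using P4.z by simp
next
  case (m a' b' c' e' e k')
  have "P4 (d+e) (\<lambda>x0 x1 x2 x3. (k*k') * (x0^(a+a') * x1^(b+b') * x2^(c+c') * x3^(ee+e')))"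
    by (rule P4.m) (use m assms(2) in simp)
  then show ?case by (simp add: power_add algebra_simps)
next
  case (ad e f g) then show ?case using P4.ad[OF ad.IH] by (simp add: distrib_left)
qed

lemma P4_mul: "P4 d f \<Longrightarrow> P4 e g \<Longrightarrow> P4 (d + e) (\<lambda>x0 x1 x2 x3. f x0 x1 x2 x3 * g x0 x1 x2 x3)"
proof (induction rule: P4.induct)
  case (z d) then show ?case using P4.z by simp
next
  case (m a b c ee d k) then show ?case using P4_mul_m by blast
next
  case (ad d f h) then show ?case using P4.ad[OF ad.IH] by (simp add: distrib_right)
qed

lemma P4_sum: "finite S \<Longrightarrow> (\<And>i. i \<in> S \<Longrightarrow> P4 d (F i)) \<Longrightarrow>
   P4 d (\<lambda>x0 x1 x2 x3. \<Sum>i\<in>S. F i x0 x1 x2 x3)"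
proof (induction S rule: finite_induct)
  case empty then show ?case using P4.z by simp
next
  case (insert x S)
  then show ?case using P4.ad[of d "F x" "\<lambda>x0 x1 x2 x3. \<Sum>i\<in>S. F i x0 x1 x2 x3"] by simp
qed

lemma nested_sum: "(\<Sum>a\<le>d. \<Sum>b\<le>d. \<Sum>c\<le>(d::nat). \<Sum>e\<le>d. G (a,b,c,e)) = (\<Sum>m\<in>{..d}\<times>{..d}\<times>{..d}\<times>{..d}. (G m::real))"
  by (simp add: sum.cartesian_product)

lemma P4_term: assumes h: "(cf \<noteq> 0 \<Longrightarrow> a+b+c+e \<le> d)" shows "P4 d (\<lambda>x0 x1 x2 x3. cf * x0 ^ a * x1 ^ b * x2 ^ c * x3 ^ e)"
proof (cases "cf = 0")
  case True then show ?thesis using P4.z by simp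
next
  case False
  then show ?thesis using h P4.m[of a b c e d cf] by (simp add: mult.assoc)
qed

lemma poly4_P4: "poly4_le d g \<Longrightarrow> P4 d g"
proof -
  assume "poly4_le d g"
  then obtain cf where cf: "\<forall>a b c e. cf (a, b, c, e) \<noteq> 0 \<longrightarrow> a + b + c + e \<le> d"
    and g: "\<forall>x0 x1 x2 x3. g x0 x1 x2 x3 = (\<Sum>a\<le>d. \<Sum>b\<le>d. \<Sum>c\<le>d. \<Sum>e\<le>d.
           cf (a, b, c, e) * x0 ^ a * x1 ^ b * x2 ^ c * x3 ^ e)"
    unfolding poly4_le_def by blast
  have "g = (\<lambda>x0 x1 x2 x3. \<Sum>a\<le>d. \<Sum>b\<le>d. \<Sum>c\<le>d. \<Sum>e\<le>d.
           cf (a, b, c, e) * x0 ^ a * x1 ^ b * x2 ^ c * x3 ^ e)" using g by (intro ext) simp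
  moreover have "P4 d (\<lambda>x0 x1 x2 x3. \<Sum>a\<le>d. \<Sum>b\<le>d. \<Sum>c\<le>d. \<Sum>e\<le>d.
           cf (a, b, c, e) * x0 ^ a * x1 ^ b * x2 ^ c * x3 ^ e)"
    by (intro P4_sum P4_term finite_atMost) (use cf in blast)
  ultimately show ?thesis by simp
qed

lemma P4_poly4: "P4 d g \<Longrightarrow> poly4_le d g"
proof (induction rule: P4.induct)
  case (z d)
  show ?case unfolding poly4_le_def by (rule exI[of _ "\<lambda>_. 0"]) simp
next
  case (m a b c e d k)
  define cf where "cf = (\<lambda>m'::nat\<times>nat\<times>nat\<times>nat. if m' = (a,b,c,e) then k else 0)"
  have "(\<Sum>m'\<in>{..d}\<times>{..d}\<times>{..d}\<times>{..d}. cf m' * fst m' ^ 0 * 0) = 0" by simp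
  have s: "(\<Sum>m'\<in>{..d}\<times>{..d}\<times>{..d}\<times>{..d}. cf m' * x0 ^ fst m' * x1 ^ fst (snd m') * x2 ^ fst (snd (snd m')) * x3 ^ snd (snd (snd m')))
     = k * (x0^a * x1^b * x2^c * x3^e)" for x0 x1 x2 x3
  proof -
    have "(\<Sum>m'\<in>{..d}\<times>{..d}\<times>{..d}\<times>{..d}. cf m' * x0 ^ fst m' * x1 ^ fst (snd m') * x2 ^ fst (snd (snd m')) * x3 ^ snd (snd (snd m')))
      = (\<Sum>m'\<in>{..d}\<times>{..d}\<times>{..d}\<times>{..d}. if m' = (a,b,c,e) then k * x0 ^ fst m' * x1 ^ fst (snd m') * x2 ^ fst (snd (snd m')) * x3 ^ snd (snd (snd m')) else 0)"
      by (rule sum.cong) (auto simp: cf_def)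
    also have "\<dots> = k * (x0^a * x1^b * x2^c * x3^e)"
      using m by (subst sum.delta) (auto simp: mult.assoc)
    finally show ?thesis .
  qed
  show ?case unfolding poly4_le_def
    apply (rule exI[of _ cf])
    apply (intro conjI allI)
    subgoal using m by (auto simp: cf_def)
    subgoal for x0 x1 x2 x3 using s[of x0 x1 x2 x3]
      by (subst nested_sum[where G = "\<lambda>m'. cf m' * x0 ^ fst m' * x1 ^ fst (snd m') * x2 ^ fst (snd (snd m')) * x3 ^ snd (snd (snd m'))", simplified]) simp
    done
next
  case (ad d f g)
  obtain cf1 where c1: "\<forall>a b c e. cf1 (a, b, c, e) \<noteq> 0 \<longrightarrow> a + b + c + e \<le> d"
    and f: "\<forall>x0 x1 x2 x3. f x0 x1 x2 x3 = (\<Sum>a\<le>d. \<Sum>b\<le>d. \<Sum>c\<le>d. \<Sum>e\<le>d.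
           cf1 (a, b, c, e) * x0 ^ a * x1 ^ b * x2 ^ c * x3 ^ e)"
    using ad.IH(1) unfolding poly4_le_def by blast
  obtain cf2 where c2: "\<forall>a b c e. cf2 (a, b, c, e) \<noteq> 0 \<longrightarrow> a + b + c + e \<le> d"
    and g: "\<forall>x0 x1 x2 x3. g x0 x1 x2 x3 = (\<Sum>a\<le>d. \<Sum>b\<le>d. \<Sum>c\<le>d. \<Sum>e\<le>d.
           cf2 (a, b, c, e) * x0 ^ a * x1 ^ b * x2 ^ c * x3 ^ e)"
    using ad.IH(2) unfolding poly4_le_def by blast
  show ?case unfolding poly4_le_def
    apply (rule exI[of _ "\<lambda>m. cf1 m + cf2 m"])
    apply (intro conjI allI)
    subgoal using c1 c2 by (metis add.right_neutral)
    subgoal using f g by (simp add: sum.distrib distrib_right)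
    done
qed

lemma poly4_iff: "poly4_le d g = P4 d g"
  using poly4_P4 P4_poly4 by blast



lemma degree_lin_pow: "degree ([:u,w:]^n) \<le> n"
proof -
  have "degree [:u,w:] \<le> 1" by (simp add: degree_pCons_eq_if)
  then have "degree [:u,w:] * n \<le> n" using mult_le_mono1[of "degree [:u,w:]" 1 n] by simp
  then show ?thesis using degree_power_le[of "[:u,w:]" n] by linarith
qed

lemma P4_line:
  assumes "P4 d f"
  shows "\<exists>P. degree P \<le> d \<and> (\<forall>s. f (u0+s*w0) (u1+s*w1) (u2+s*w2) (u3+s*w3) = poly P s)"
  using assms
proof (induction rule: P4.induct)
  case (z d) then show ?case by (intro exI[of _ 0]) simp
next
  case (m a b c e d k)
  define P where "P = smult k ([:u0,w0:]^a * [:u1,w1:]^b * [:u2,w2:]^c * [:u3,w3:]^e)"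
  have "degree P \<le> a + b + c + e"
    unfolding P_def
    by (rule order.trans[OF degree_smult_le] order.trans[OF degree_mult_le] add_mono degree_lin_pow)+
  moreover have "\<forall>s. k * ((u0+s*w0)^a * (u1+s*w1)^b * (u2+s*w2)^c * (u3+s*w3)^e) = poly P s"
    by (simp add: P_def poly_power algebra_simps)
  ultimately show ?case using m by (intro exI[of _ P]) auto
next
  case (ad d f g)
  then obtain P Q where "degree P \<le> d" "degree Q \<le> d"
    "\<forall>s. f (u0+s*w0) (u1+s*w1) (u2+s*w2) (u3+s*w3) = poly P s"
    "\<forall>s. g (u0+s*w0) (u1+s*w1) (u2+s*w2) (u3+s*w3) = poly Q s" by blast
  then show ?case by (intro exI[of _ "P+Q"]) (auto intro: order.trans[OF degree_add_le])
qed

lemma P4_split: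
  assumes "P4 d g"
  shows "\<exists>H L. P4 d H \<and> P4 (d-1) L \<and> (\<forall>x0 x1 x2 x3. g x0 x1 x2 x3 = H x0 x1 x2 x3 + L x0 x1 x2 x3)
     \<and> (\<forall>t x0 x1 x2 x3. H (t*x0) (t*x1) (t*x2) (t*x3) = t^d * H x0 x1 x2 x3)
     \<and> (d = 0 \<longrightarrow> L = (\<lambda>_ _ _ _. 0))"
  using assms
proof (induction rule: P4.induct)
  case (z d) then show ?case by (intro exI[of _ "\<lambda>_ _ _ _. 0"]) (simp add: P4.z)
next
  case (m a b c e d k)
  show ?case
  proof (cases "a+b+c+e = d")
    case True
    show ?thesis
      apply (rule exI[of _ "\<lambda>x0 x1 x2 x3. k * (x0^a * x1^b * x2^c * x3^e)"])
      apply (rule exI[of _ "\<lambda>_ _ _ _. 0"])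
      using m True P4.m[of a b c e d k] by (simp add: P4.z power_mult_distrib power_add[symmetric] mult_ac True[symmetric] add.assoc)
  next
    case False
    show ?thesis
      apply (rule exI[of _ "\<lambda>_ _ _ _. 0"])
      apply (rule exI[of _ "\<lambda>x0 x1 x2 x3. k * (x0^a * x1^b * x2^c * x3^e)"])
      using m False by (auto simp: P4.z intro!: P4.m)
  qed
next
  case (ad d f g)
  then obtain H1 L1 H2 L2 where
    "P4 d H1" "P4 (d-1) L1" "\<forall>x0 x1 x2 x3. f x0 x1 x2 x3 = H1 x0 x1 x2 x3 + L1 x0 x1 x2 x3"
    "\<forall>t x0 x1 x2 x3. H1 (t*x0) (t*x1) (t*x2) (t*x3) = t^d * H1 x0 x1 x2 x3"
    "d = 0 \<longrightarrow> L1 = (\<lambda>_ _ _ _. 0)"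
    "P4 d H2" "P4 (d-1) L2" "\<forall>x0 x1 x2 x3. g x0 x1 x2 x3 = H2 x0 x1 x2 x3 + L2 x0 x1 x2 x3"
    "\<forall>t x0 x1 x2 x3. H2 (t*x0) (t*x1) (t*x2) (t*x3) = t^d * H2 x0 x1 x2 x3"
    "d = 0 \<longrightarrow> L2 = (\<lambda>_ _ _ _. 0)" by metis
  note hh = this
  show ?case
    apply (rule exI[of _ "\<lambda>x0 x1 x2 x3. H1 x0 x1 x2 x3 + H2 x0 x1 x2 x3"])
    apply (rule exI[of _ "\<lambda>x0 x1 x2 x3. L1 x0 x1 x2 x3 + L2 x0 x1 x2 x3"])
    using hh by (auto intro!: P4.ad simp: algebra_simps)
qed

definition pdeg :: "rf \<Rightarrow> nat" where "pdeg g = (LEAST d. P4 d g)"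

lemma pdeg_P4: "P4 d g \<Longrightarrow> P4 (pdeg g) g"
  unfolding pdeg_def by (rule LeastI)

lemma pdeg_le: "P4 d g \<Longrightarrow> pdeg g \<le> d"
  unfolding pdeg_def by (rule Least_le)

lemma pdeg_zero: "pdeg (\<lambda>_ _ _ _. 0) = 0"
  using pdeg_le[OF P4.z[of 0]] by simp

lemma tdeg4_eq: "tdeg4 g = (if g = (\<lambda>_ _ _ _. 0) then -\<infinity> else ereal (real (pdeg g)))"
  unfolding tdeg4_def pdeg_def poly4_iff by simp

lemma P4_top:
  assumes "P4 d f" "f \<noteq> (\<lambda>_ _ _ _. 0)"
  shows "\<exists>H. P4 (pdeg f) H \<and> (\<exists>v0 v1 v2 v3. H v0 v1 v2 v3 \<noteq> 0) \<and>
    (\<forall>v0 v1 v2 v3. \<exists>P. degree P \<le> pdeg f \<and> coeff P (pdeg f) = H v0 v1 v2 v3 \<and>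
        (\<forall>t. f (t*v0) (t*v1) (t*v2) (t*v3) = poly P t))"
proof -
  define D where "D = pdeg f"
  have PD: "P4 D f" using pdeg_P4[OF assms(1)] D_def by simp
  obtain H L where H: "P4 D H" and L: "P4 (D-1) L"
    and fHL: "\<forall>x0 x1 x2 x3. f x0 x1 x2 x3 = H x0 x1 x2 x3 + L x0 x1 x2 x3"
    and hom: "\<forall>t x0 x1 x2 x3. H (t*x0) (t*x1) (t*x2) (t*x3) = t^D * H x0 x1 x2 x3"
    and L0: "D = 0 \<longrightarrow> L = (\<lambda>_ _ _ _. 0)"
    using P4_split[OF PD] by blast
  have "\<exists>v0 v1 v2 v3. H v0 v1 v2 v3 \<noteq> 0"
  proof (rule ccontr)
    assume "\<not> ?thesis"
    then have fL: "f = L" using fHL by (auto intro!: ext)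
    show False
    proof (cases "D = 0")
      case True then show False using L0 fL assms(2) by simp
    next
      case False
      have "pdeg f \<le> D - 1" using pdeg_le[OF L] fL by simp
      then show False using False D_def by simp
    qed
  qed
  moreover have "\<exists>P. degree P \<le> D \<and> coeff P D = H v0 v1 v2 v3 \<and>
        (\<forall>t. f (t*v0) (t*v1) (t*v2) (t*v3) = poly P t)" for v0 v1 v2 v3
  proof (cases "D = 0")
    case True
    show ?thesis
      apply (rule exI[of _ "[:H v0 v1 v2 v3:]"])
      using True L0 fHL hom by auto
  next
    case False
    obtain PL where PL: "degree PL \<le> D - 1"
      "\<forall>s. L (0+s*v0) (0+s*v1) (0+s*v2) (0+s*v3) = poly PL s"
      using P4_line[OF L] by blast
    have c: "coeff PL D = 0" using PL(1) False by (intro coeff_eq_0) simp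
    show ?thesis
      apply (rule exI[of _ "monom (H v0 v1 v2 v3) D + PL"])
      using PL c fHL hom False
      by (auto simp: poly_monom intro!: order.trans[OF degree_add_le] order.trans[OF degree_monom_le])
  qed
  ultimately show ?thesis using H D_def by blast
qed


lemma poly_nonzero_ex: "(p::real poly) \<noteq> 0 \<Longrightarrow> \<exists>x. poly p x \<noteq> 0"
  using poly_eq_poly_eq_iff[of p 0] by auto

lemma degree_exact: "degree (P::real poly) \<le> D \<Longrightarrow> coeff P D \<noteq> 0 \<Longrightarrow> degree P = D"
  using le_degree[of P D] by simp

lemma line_unique:
  assumes "P4 E h" "\<forall>t. h (t*v0) (t*v1) (t*v2) (t*v3) = poly Q t"
  shows "degree Q \<le> E"
proof -
  obtain R where R: "degree R \<le> E" "\<forall>s. h (0+s*v0) (0+s*v1) (0+s*v2) (0+s*v3) = poly R s"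
    using P4_line[OF assms(1)] by blast
  have "poly R = poly Q" using R(2) assms(2) by auto
  then have "R = Q" by (simp add: poly_eq_poly_eq_iff)
  then show ?thesis using R(1) by simp
qed

lemma P4_prod:
  assumes "P4 d1 f" "P4 d2 g" "f \<noteq> (\<lambda>_ _ _ _. 0)" "g \<noteq> (\<lambda>_ _ _ _. 0)"
  shows "(\<lambda>x0 x1 x2 x3. f x0 x1 x2 x3 * g x0 x1 x2 x3) \<noteq> (\<lambda>_ _ _ _. 0) \<and>
         pdeg (\<lambda>x0 x1 x2 x3. f x0 x1 x2 x3 * g x0 x1 x2 x3) = pdeg f + pdeg g"
proof -
  let ?fg = "\<lambda>x0 x1 x2 x3. f x0 x1 x2 x3 * g x0 x1 x2 x3"
  obtain Hf u0 u1 u2 u3 where Hf: "P4 (pdeg f) Hf" "Hf u0 u1 u2 u3 \<noteq> 0"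
    and lf: "\<forall>v0 v1 v2 v3. \<exists>P. degree P \<le> pdeg f \<and> coeff P (pdeg f) = Hf v0 v1 v2 v3 \<and>
        (\<forall>t. f (t*v0) (t*v1) (t*v2) (t*v3) = poly P t)"
    using P4_top[OF assms(1,3)] by blast
  obtain Hg w0 w1 w2 w3 where Hg: "P4 (pdeg g) Hg" "Hg w0 w1 w2 w3 \<noteq> 0"
    and lg: "\<forall>v0 v1 v2 v3. \<exists>P. degree P \<le> pdeg g \<and> coeff P (pdeg g) = Hg v0 v1 v2 v3 \<and>
        (\<forall>t. g (t*v0) (t*v1) (t*v2) (t*v3) = poly P t)"
    using P4_top[OF assms(2,4)] by blast
  obtain A where A: "\<forall>s. Hf (u0+s*(w0-u0)) (u1+s*(w1-u1)) (u2+s*(w2-u2)) (u3+s*(w3-u3)) = poly A s"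
    using P4_line[OF Hf(1)] by blast
  obtain B where B: "\<forall>s. Hg (u0+s*(w0-u0)) (u1+s*(w1-u1)) (u2+s*(w2-u2)) (u3+s*(w3-u3)) = poly B s"
    using P4_line[OF Hg(1)] by blast
  have "A \<noteq> 0" using A[rule_format, of 0] Hf(2) by auto
  moreover have "B \<noteq> 0" using B[rule_format, of 1] Hg(2) by auto
  ultimately obtain s where "poly (A*B) s \<noteq> 0" using poly_nonzero_ex[of "A*B"] by auto
  then have nz: "Hf (u0+s*(w0-u0)) (u1+s*(w1-u1)) (u2+s*(w2-u2)) (u3+s*(w3-u3)) \<noteq> 0"
     "Hg (u0+s*(w0-u0)) (u1+s*(w1-u1)) (u2+s*(w2-u2)) (u3+s*(w3-u3)) \<noteq> 0"
    using A B by auto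
  obtain Pf where Pf: "degree Pf \<le> pdeg f" "coeff Pf (pdeg f) \<noteq> 0"
    "\<forall>t. f (t*(u0+s*(w0-u0))) (t*(u1+s*(w1-u1))) (t*(u2+s*(w2-u2))) (t*(u3+s*(w3-u3))) = poly Pf t"
    using lf nz(1) by metis
  obtain Pg where Pg: "degree Pg \<le> pdeg g" "coeff Pg (pdeg g) \<noteq> 0"
    "\<forall>t. g (t*(u0+s*(w0-u0))) (t*(u1+s*(w1-u1))) (t*(u2+s*(w2-u2))) (t*(u3+s*(w3-u3))) = poly Pg t"
    using lg nz(2) by metis
  have df: "degree Pf = pdeg f" using degree_exact Pf by blast
  have dg: "degree Pg = pdeg g" using degree_exact Pg by blast
  have "Pf \<noteq> 0" "Pg \<noteq> 0" using Pf(2) Pg(2) by auto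
  then have dfg: "degree (Pf * Pg) = pdeg f + pdeg g"
    using degree_mult_eq[of Pf Pg] df dg by simp
  have nz2: "Pf * Pg \<noteq> 0" using \<open>Pf \<noteq> 0\<close> \<open>Pg \<noteq> 0\<close> by simp
  have lfg: "\<forall>t. ?fg (t*(u0+s*(w0-u0))) (t*(u1+s*(w1-u1))) (t*(u2+s*(w2-u2))) (t*(u3+s*(w3-u3))) = poly (Pf*Pg) t"
    using Pf(3) Pg(3) by simp
  have PP: "P4 (pdeg f + pdeg g) ?fg" using P4_mul[OF pdeg_P4[OF assms(1)] pdeg_P4[OF assms(2)]] .
  have "?fg \<noteq> (\<lambda>_ _ _ _. 0)"
  proof
    assume "?fg = (\<lambda>_ _ _ _. 0)"
    then have "\<forall>t. poly (Pf*Pg) t = 0" using lfg by (metis (no_types, lifting))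
    then show False using poly_nonzero_ex[OF nz2] by blast
  qed
  moreover have "pdeg ?fg \<le> pdeg f + pdeg g" using pdeg_le[OF PP] .
  moreover have "pdeg f + pdeg g \<le> pdeg ?fg"
    using line_unique[OF pdeg_P4[OF PP] lfg] dfg by simp
  ultimately show ?thesis by simp
qed

lemma coeff_sq_nonneg:
  assumes "degree (Q::real poly) \<le> M"
  shows "coeff (Q*Q) (2*M) \<ge> 0"
proof (cases "degree Q = M")
  case True
  then show ?thesis using coeff_mult_degree_sum[of Q Q] by (simp add: mult_2)
next
  case False
  then have "degree (Q*Q) < 2*M" using assms degree_mult_le[of Q Q]
    by (cases "M = 0") auto
  then show ?thesis by (simp add: coeff_eq_0)
qed

lemma P4_sumsq:
  assumes fin: "finite I" and pol: "\<forall>i\<in>I. \<exists>d. P4 d (F i)" and nz: "\<exists>i\<in>I. F i \<noteq> (\<lambda>_ _ _ _. 0)"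
  shows "(\<lambda>x0 x1 x2 x3. \<Sum>i\<in>I. (F i x0 x1 x2 x3)\<^sup>2) \<noteq> (\<lambda>_ _ _ _. 0) \<and>
         (\<exists>d. P4 d (\<lambda>x0 x1 x2 x3. \<Sum>i\<in>I. (F i x0 x1 x2 x3)\<^sup>2)) \<and>
         pdeg (\<lambda>x0 x1 x2 x3. \<Sum>i\<in>I. (F i x0 x1 x2 x3)\<^sup>2) = 2 * Max ((\<lambda>i. pdeg (F i)) ` I)"
proof -
  let ?N = "\<lambda>x0 x1 x2 x3. \<Sum>i\<in>I. (F i x0 x1 x2 x3)\<^sup>2"
  define M where "M = Max ((\<lambda>i. pdeg (F i)) ` I)"
  have Ine: "I \<noteq> {}" using nz by auto
  have "M \<in> (\<lambda>i. pdeg (F i)) ` I"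
    using Max_in[of "(\<lambda>i. pdeg (F i)) ` I"] fin Ine M_def by auto
  then obtain i0 where i0: "i0 \<in> I" "pdeg (F i0) = M" by auto
  have le: "pdeg (F i) \<le> M" if "i \<in> I" for i using fin that M_def by auto
  have PM: "P4 M (F i)" if "i \<in> I" for i
    using pol that le[OF that] pdeg_P4 P4_mono by blast
  have PN: "P4 (2*M) ?N"
  proof (rule P4_sum[OF fin])
    fix i assume "i \<in> I"
    then show "P4 (2*M) (\<lambda>x0 x1 x2 x3. (F i x0 x1 x2 x3)\<^sup>2)"
      using P4_mul[OF PM PM] by (simp add: power2_eq_square mult_2)
  qed
  have "?N \<noteq> (\<lambda>_ _ _ _. 0)"
  proof
    assume N0: "?N = (\<lambda>_ _ _ _. 0)"
    obtain j where j: "j \<in> I" "F j \<noteq> (\<lambda>_ _ _ _. 0)" using nz by blast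
    then obtain x0 x1 x2 x3 where "F j x0 x1 x2 x3 \<noteq> 0" by (meson ext)
    then have "0 < (F j x0 x1 x2 x3)\<^sup>2" by simp
    also have "\<dots> \<le> ?N x0 x1 x2 x3"
      using member_le_sum[of j I "\<lambda>i. (F i x0 x1 x2 x3)\<^sup>2"] j fin by simp
    finally show False using N0 by (metis less_irrefl)
  qed
  moreover have "pdeg ?N = 2 * M"
  proof (cases "M = 0")
    case True then show ?thesis using pdeg_le[OF PN] by simp
  next
    case False
    have Fi0: "F i0 \<noteq> (\<lambda>_ _ _ _. 0)" using i0 False pdeg_zero by auto
    obtain H v0 v1 v2 v3 where H: "H v0 v1 v2 v3 \<noteq> 0"
      and lH: "\<forall>v0 v1 v2 v3. \<exists>P. degree P \<le> pdeg (F i0) \<and> coeff P (pdeg (F i0)) = H v0 v1 v2 v3 \<and>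
        (\<forall>t. F i0 (t*v0) (t*v1) (t*v2) (t*v3) = poly P t)"
      using P4_top[OF PM[OF i0(1)] Fi0] by blast
    obtain P0 where P0: "degree P0 \<le> M" "coeff P0 M \<noteq> 0"
        "\<forall>t. F i0 (t*v0) (t*v1) (t*v2) (t*v3) = poly P0 t"
      using lH H i0(2) by metis
    have "\<forall>i\<in>I. \<exists>P. degree P \<le> M \<and> (\<forall>t. F i (t*v0) (t*v1) (t*v2) (t*v3) = poly P t)"
    proof
      fix i assume "i \<in> I"
      then obtain P where "degree P \<le> M" "\<forall>s. F i (0+s*v0) (0+s*v1) (0+s*v2) (0+s*v3) = poly P s"
        using P4_line[OF PM] by blast
      then show "\<exists>P. degree P \<le> M \<and> (\<forall>t. F i (t*v0) (t*v1) (t*v2) (t*v3) = poly P t)" by auto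
    qed
    then obtain PF where PF: "\<forall>i\<in>I. degree (PF i) \<le> M \<and> (\<forall>t. F i (t*v0) (t*v1) (t*v2) (t*v3) = poly (PF i) t)"
      by metis
    have "PF i0 = P0"
    proof -
      have "poly (PF i0) = poly P0" using PF i0(1) P0(3) by auto
      then show ?thesis by (simp add: poly_eq_poly_eq_iff)
    qed
    define S where "S = (\<Sum>i\<in>I. PF i * PF i)"
    have lS: "\<forall>t. ?N (t*v0) (t*v1) (t*v2) (t*v3) = poly S t"
      unfolding S_def using PF by (simp add: poly_sum power2_eq_square)
    have "coeff S (2*M) = (\<Sum>i\<in>I. coeff (PF i * PF i) (2*M))"
      unfolding S_def by (simp add: coeff_sum)
    also have "\<dots> = coeff (PF i0 * PF i0) (2*M) + (\<Sum>i\<in>I-{i0}. coeff (PF i * PF i) (2*M))"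
      using fin i0(1) by (simp add: sum.remove)
    also have "\<dots> > 0"
    proof -
      have "degree P0 = M" using degree_exact P0 by blast
      then have "coeff (P0*P0) (2*M) = coeff P0 M * coeff P0 M"
        using coeff_mult_degree_sum[of P0 P0] by (simp add: mult_2)
      then have "coeff (PF i0 * PF i0) (2*M) > 0" using P0(2) \<open>PF i0 = P0\<close> by (metis zero_less_mult_iff linorder_neqE_linordered_idom mult_neg_neg)
      moreover have "(\<Sum>i\<in>I-{i0}. coeff (PF i * PF i) (2*M)) \<ge> 0"
        using PF coeff_sq_nonneg by (intro sum_nonneg) auto
      ultimately show ?thesis by linarith
    qed
    finally have "coeff S (2*M) \<noteq> 0" by simp
    then have "2*M \<le> degree S" by (rule le_degree)
    moreover have "degree S \<le> pdeg ?N" using line_unique[OF pdeg_P4[OF PN] lS] .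
    ultimately show ?thesis using pdeg_le[OF PN] by simp
  qed
  ultimately show ?thesis using PN M_def by blast
qed


lemma H1X_poly:
  assumes "p \<in> H1X"
  shows "\<exists>d. P4 d (\<lambda>x0 x1 x2 x3. Re_q (p (Quat x0 x1 x2 x3))) \<and> P4 d (\<lambda>x0 x1 x2 x3. Im_i (p (Quat x0 x1 x2 x3)))
     \<and> P4 d (\<lambda>x0 x1 x2 x3. Im_j (p (Quat x0 x1 x2 x3))) \<and> P4 d (\<lambda>x0 x1 x2 x3. Im_k (p (Quat x0 x1 x2 x3)))"
  using assms
proof (induction rule: H1X.induct)
  case (const c) then show ?case by (intro exI[of _ 0]) (simp add: P4_const)
next
  case ident show ?case using P4_x0 P4_x1 P4_x2 P4_x3 by (intro exI[of _ 1]) simp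
next
  case (add f g)
  then obtain d1 d2 where h: "P4 d1 (\<lambda>x0 x1 x2 x3. Re_q (f (Quat x0 x1 x2 x3)))" "P4 d1 (\<lambda>x0 x1 x2 x3. Im_i (f (Quat x0 x1 x2 x3)))"
     "P4 d1 (\<lambda>x0 x1 x2 x3. Im_j (f (Quat x0 x1 x2 x3)))" "P4 d1 (\<lambda>x0 x1 x2 x3. Im_k (f (Quat x0 x1 x2 x3)))"
     "P4 d2 (\<lambda>x0 x1 x2 x3. Re_q (g (Quat x0 x1 x2 x3)))" "P4 d2 (\<lambda>x0 x1 x2 x3. Im_i (g (Quat x0 x1 x2 x3)))"
     "P4 d2 (\<lambda>x0 x1 x2 x3. Im_j (g (Quat x0 x1 x2 x3)))" "P4 d2 (\<lambda>x0 x1 x2 x3. Im_k (g (Quat x0 x1 x2 x3)))"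
    by blast
  have h': "P4 (max d1 d2) (\<lambda>x0 x1 x2 x3. Re_q (f (Quat x0 x1 x2 x3)))" "P4 (max d1 d2) (\<lambda>x0 x1 x2 x3. Im_i (f (Quat x0 x1 x2 x3)))"
     "P4 (max d1 d2) (\<lambda>x0 x1 x2 x3. Im_j (f (Quat x0 x1 x2 x3)))" "P4 (max d1 d2) (\<lambda>x0 x1 x2 x3. Im_k (f (Quat x0 x1 x2 x3)))"
     "P4 (max d1 d2) (\<lambda>x0 x1 x2 x3. Re_q (g (Quat x0 x1 x2 x3)))" "P4 (max d1 d2) (\<lambda>x0 x1 x2 x3. Im_i (g (Quat x0 x1 x2 x3)))"
     "P4 (max d1 d2) (\<lambda>x0 x1 x2 x3. Im_j (g (Quat x0 x1 x2 x3)))" "P4 (max d1 d2) (\<lambda>x0 x1 x2 x3. Im_k (g (Quat x0 x1 x2 x3)))"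
    using h by (auto elim!: P4_mono)
  show ?case
    by (rule exI[of _ "max d1 d2"]) (simp add: qadd_def P4.ad h')
next
  case (neg f)
  then obtain d where h: "P4 d (\<lambda>x0 x1 x2 x3. Re_q (f (Quat x0 x1 x2 x3)))" "P4 d (\<lambda>x0 x1 x2 x3. Im_i (f (Quat x0 x1 x2 x3)))"
     "P4 d (\<lambda>x0 x1 x2 x3. Im_j (f (Quat x0 x1 x2 x3)))" "P4 d (\<lambda>x0 x1 x2 x3. Im_k (f (Quat x0 x1 x2 x3)))" by blast
  show ?case by (rule exI[of _ d]) (simp add: qneg_def P4_neg h)
next
  case (mul f g)
  then obtain d1 d2 where h: "P4 d1 (\<lambda>x0 x1 x2 x3. Re_q (f (Quat x0 x1 x2 x3)))" "P4 d1 (\<lambda>x0 x1 x2 x3. Im_i (f (Quat x0 x1 x2 x3)))"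
     "P4 d1 (\<lambda>x0 x1 x2 x3. Im_j (f (Quat x0 x1 x2 x3)))" "P4 d1 (\<lambda>x0 x1 x2 x3. Im_k (f (Quat x0 x1 x2 x3)))"
     "P4 d2 (\<lambda>x0 x1 x2 x3. Re_q (g (Quat x0 x1 x2 x3)))" "P4 d2 (\<lambda>x0 x1 x2 x3. Im_i (g (Quat x0 x1 x2 x3)))"
     "P4 d2 (\<lambda>x0 x1 x2 x3. Im_j (g (Quat x0 x1 x2 x3)))" "P4 d2 (\<lambda>x0 x1 x2 x3. Im_k (g (Quat x0 x1 x2 x3)))"
    by blast
  show ?case
    apply (rule exI[of _ "d1 + d2"])
    apply (simp only: qmul_def quat.sel)
    apply (intro conjI P4_diff P4.ad P4_mul h)
    done
qed

definition Nf :: "(quat \<Rightarrow> quat) \<Rightarrow> rf" where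
  "Nf p = (\<lambda>x0 x1 x2 x3.
      let y = p (Quat x0 x1 x2 x3) in
        (Re_q y)\<^sup>2 + (Im_i y)\<^sup>2 + (Im_j y)\<^sup>2 + (Im_k y)\<^sup>2)"

lemma qdeg_Nf: "qdeg p = tdeg4 (Nf p) / 2"
  unfolding qdeg_def Nf_def ..

lemma Nf_zero: "Nf p = (\<lambda>_ _ _ _. 0) \<longleftrightarrow> p = (\<lambda>_. qzero)"
proof
  assume h: "Nf p = (\<lambda>_ _ _ _. 0)"
  show "p = (\<lambda>_. qzero)"
  proof
    fix q show "p q = qzero"
    proof (cases q)
      case (Quat x0 x1 x2 x3)
      have "Nf p x0 x1 x2 x3 = 0" using h by simp
      then have "Re_q (p q) = 0 \<and> Im_i (p q) = 0 \<and> Im_j (p q) = 0 \<and> Im_k (p q) = 0"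
        unfolding Nf_def Let_def Quat
        by (smt (verit) zero_le_power2 power2_eq_square mult_eq_0_iff)
      then show ?thesis by (cases "p q") (simp add: qzero_def)
    qed
  qed
next
  assume "p = (\<lambda>_. qzero)"
  then show "Nf p = (\<lambda>_ _ _ _. 0)" by (simp add: Nf_def qzero_def)
qed

lemma Nf_mul: "Nf (\<lambda>x. qmul (p x) (q x)) = (\<lambda>x0 x1 x2 x3. Nf p x0 x1 x2 x3 * Nf q x0 x1 x2 x3)"
  by (intro ext) (simp add: Nf_def Let_def qmul_def power2_eq_square algebra_simps)

lemma Nf_good:
  assumes "p \<in> H1X" "p \<noteq> (\<lambda>_. qzero)"
  shows "\<exists>M. Nf p \<noteq> (\<lambda>_ _ _ _. 0) \<and> (\<exists>d. P4 d (Nf p)) \<and> pdeg (Nf p) = 2 * M"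
proof -
  obtain d where h: "P4 d (\<lambda>x0 x1 x2 x3. Re_q (p (Quat x0 x1 x2 x3)))" "P4 d (\<lambda>x0 x1 x2 x3. Im_i (p (Quat x0 x1 x2 x3)))"
     "P4 d (\<lambda>x0 x1 x2 x3. Im_j (p (Quat x0 x1 x2 x3)))" "P4 d (\<lambda>x0 x1 x2 x3. Im_k (p (Quat x0 x1 x2 x3)))"
    using H1X_poly[OF assms(1)] by blast
  define F where "F = (\<lambda>k::nat. \<lambda>x0 x1 x2 x3. let y = p (Quat x0 x1 x2 x3) in
     (if k = 0 then Re_q y else if k = 1 then Im_i y else if k = 2 then Im_j y else Im_k y))"
  have NF: "Nf p = (\<lambda>x0 x1 x2 x3. \<Sum>i\<in>{0,1,2,3}. (F i x0 x1 x2 x3)\<^sup>2)"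
    by (intro ext) (simp add: Nf_def F_def Let_def)
  have pol: "\<forall>i\<in>{0,1,2,3}. \<exists>d. P4 d (F i)"
    using h by (auto simp: F_def Let_def)
  have Nnz: "Nf p \<noteq> (\<lambda>_ _ _ _. 0)" using Nf_zero assms(2) by blast
  have nz: "\<exists>i\<in>{0,1,2,3}. F i \<noteq> (\<lambda>_ _ _ _. 0)"
  proof (rule ccontr)
    assume "\<not> ?thesis"
    then have "\<forall>i\<in>{0,1,2,3::nat}. F i = (\<lambda>_ _ _ _. 0)" by blast
    then have "Nf p = (\<lambda>_ _ _ _. 0)" unfolding NF by (intro ext) simp
    then show False using Nnz by simp
  qed
  show ?thesis using P4_sumsq[OF _ pol nz] NF by auto
qed


lemma qdeg_good:
  assumes "p \<in> H1X" "p \<noteq> (\<lambda>_. qzero)"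
  shows "\<exists>M. Nf p \<noteq> (\<lambda>_ _ _ _. 0) \<and> (\<exists>d. P4 d (Nf p)) \<and> pdeg (Nf p) = 2 * M \<and> qdeg p = ereal (real M)"
proof -
  obtain M where M: "Nf p \<noteq> (\<lambda>_ _ _ _. 0)" "\<exists>d. P4 d (Nf p)" "pdeg (Nf p) = 2 * M"
    using Nf_good[OF assms] by blast
  have "qdeg p = ereal (real M)" unfolding qdeg_Nf tdeg4_eq using M by simp
  then show ?thesis using M by blast
qed

lemma qdeg_zero: "qdeg (\<lambda>_. qzero) = -\<infinity>"
  unfolding qdeg_Nf tdeg4_eq using Nf_zero by simp

theorem lemma3:
  shows "(\<forall>p \<in> H1X. (p = (\<lambda>_. qzero) \<longrightarrow> qdeg p = -\<infinity>) \<and>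
                     (p \<noteq> (\<lambda>_. qzero) \<longrightarrow> (\<exists>n::int. qdeg p = ereal (real_of_int n))))
       \<and> (\<forall>p \<in> H1X. \<forall>q \<in> H1X. qdeg (\<lambda>x. qmul (p x) (q x)) = qdeg p + qdeg q)"
proof (rule conjI; intro ballI)
  fix p assume p: "p \<in> H1X"
  show "(p = (\<lambda>_. qzero) \<longrightarrow> qdeg p = -\<infinity>) \<and>
        (p \<noteq> (\<lambda>_. qzero) \<longrightarrow> (\<exists>n::int. qdeg p = ereal (real_of_int n)))"
  proof (intro conjI impI)
    assume "p = (\<lambda>_. qzero)" then show "qdeg p = -\<infinity>" using qdeg_zero by simp
  next
    assume "p \<noteq> (\<lambda>_. qzero)"
    then obtain M where "qdeg p = ereal (real M)" using qdeg_good[OF p] by blast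
    then show "\<exists>n::int. qdeg p = ereal (real_of_int n)" by (intro exI[of _ "int M"]) simp
  qed
next
  fix p q assume p: "p \<in> H1X" and q: "q \<in> H1X"
  let ?pq = "\<lambda>x. qmul (p x) (q x)"
  have fin: "qdeg r \<noteq> \<infinity>" if "r \<in> H1X" for r
  proof (cases "r = (\<lambda>_. qzero)")
    case True then show ?thesis using qdeg_zero by simp
  next
    case False then show ?thesis using qdeg_good[OF that] by auto
  qed
  show "qdeg ?pq = qdeg p + qdeg q"
  proof (cases "p = (\<lambda>_. qzero) \<or> q = (\<lambda>_. qzero)")
    case True
    have z: "Nf (\<lambda>_. qzero) = (\<lambda>_ _ _ _. 0)" by (simp add: Nf_def qzero_def)
    have "Nf ?pq = (\<lambda>_ _ _ _. 0)" unfolding Nf_mul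
    proof (rule disjE[OF True])
      assume "p = (\<lambda>_. qzero)" then show "(\<lambda>x0 x1 x2 x3. Nf p x0 x1 x2 x3 * Nf q x0 x1 x2 x3) = (\<lambda>_ _ _ _. 0)"
        using z by simp
    next
      assume "q = (\<lambda>_. qzero)" then show "(\<lambda>x0 x1 x2 x3. Nf p x0 x1 x2 x3 * Nf q x0 x1 x2 x3) = (\<lambda>_ _ _ _. 0)"
        using z by simp
    qed
    then have "qdeg ?pq = -\<infinity>" using Nf_zero qdeg_zero by metis
    moreover have "qdeg p + qdeg q = -\<infinity>"
    proof (rule disjE[OF True])
      assume "p = (\<lambda>_. qzero)"
      then have "qdeg p = -\<infinity>" using qdeg_zero by simp
      then show ?thesis using fin[OF q] by (cases "qdeg q") simp_all
    next
      assume "q = (\<lambda>_. qzero)"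
      then have "qdeg q = -\<infinity>" using qdeg_zero by simp
      then show ?thesis using fin[OF p] by (cases "qdeg p") simp_all
    qed
    ultimately show ?thesis by simp
  next
    case False
    obtain M where M: "Nf p \<noteq> (\<lambda>_ _ _ _. 0)" "\<exists>d. P4 d (Nf p)" "pdeg (Nf p) = 2 * M" "qdeg p = ereal (real M)"
      using qdeg_good[OF p] False by blast
    obtain K where K: "Nf q \<noteq> (\<lambda>_ _ _ _. 0)" "\<exists>d. P4 d (Nf q)" "pdeg (Nf q) = 2 * K" "qdeg q = ereal (real K)"
      using qdeg_good[OF q] False by blast
    obtain d1 d2 where d1: "P4 d1 (Nf p)" and d2: "P4 d2 (Nf q)" using M(2) K(2) by blast
    have pr: "Nf ?pq \<noteq> (\<lambda>_ _ _ _. 0) \<and> pdeg (Nf ?pq) = 2*M + 2*K"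
      unfolding Nf_mul using P4_prod[OF d1 d2 M(1) K(1)] M(3) K(3) by simp
    have "qdeg ?pq = ereal (real (2*M + 2*K)) / 2" unfolding qdeg_Nf tdeg4_eq using pr by simp
    also have "\<dots> = ereal (real M) + ereal (real K)" by simp
    finally show ?thesis using M K by simp
  qed
qed

end
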